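(* Let $X=\{x_j\mid j\in J\}$ be a set and $\tilde q$ a symbol not in $X$. Let $V$ be the $\mathbf{k}$-vector space with basis $X\cup\{\tilde q\}$, $T(V)$ its tensor algebra, and $I$ the two-sided ideal of $T(V)$ generated by $\{\tilde q\otimes\tilde q-\tilde q\}\cup\{\tilde q\otimes a\otimes\tilde q-\tilde q\otimes a\mid a\in T(V)\}$. Let $\hat A:=T(V)/I$, $\hat q:=\tilde q+I$, and define $\hat i:X\to(\hat A,\hat q)$ by $\hat i(x_j)=x_j+I$. Then $((\hat A,\hat q),\hat i)$ is the free invariant algebra generated by $X$: for every invariant algebra $(A,q)$ and every map $\theta:X\to(A,q)$ there is a unique invariant homomorphism $\hat\theta:(\hat A,\hat q)\to(A,q)$ with $\hat\theta\circ\hat i=\theta$.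
   Context: All associative algebras have an identity. For an associative algebra $A$ with idempotent $q$, the invariant algebra is $(A,q):=\{x\in A\mid qxq=qx\}$ (a subalgebra containing $1$ and $q$). For invariant algebras $(A,q_A),(B,q_B)$, an invariant homomorphism is a linear map $\phi$ with $\phi(xy)=\phi(x)\phi(y)$, $\phi(1_A)=1_B$, $\phi(q_A)=q_B$. *)

theory Defs
  imports "HOL-Algebra.QuotRing"
begin

definition kalg :: "('a, 'm) ring_scheme \<Rightarrow> ('k::field \<Rightarrow> 'a \<Rightarrow> 'a) \<Rightarrow> bool" where
  "kalg A s \<longleftrightarrow> ring A \<and>
     (\<forall>c. \<forall>x\<in>carrier A. s c x \<in> carrier A) \<and>
     (\<forall>c d. \<forall>x\<in>carrier A. s (c + d) x = s c x \<oplus>\<^bsub>A\<^esub> s d x) \<and>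
     (\<forall>c. \<forall>x\<in>carrier A. \<forall>y\<in>carrier A. s c (x \<oplus>\<^bsub>A\<^esub> y) = s c x \<oplus>\<^bsub>A\<^esub> s c y) \<and>
     (\<forall>c d. \<forall>x\<in>carrier A. s (c * d) x = s c (s d x)) \<and>
     (\<forall>x\<in>carrier A. s 1 x = x) \<and>
     (\<forall>c. \<forall>x\<in>carrier A. \<forall>y\<in>carrier A.
        s c (x \<otimes>\<^bsub>A\<^esub> y) = s c x \<otimes>\<^bsub>A\<^esub> y \<and> s c (x \<otimes>\<^bsub>A\<^esub> y) = x \<otimes>\<^bsub>A\<^esub> s c y)"

text \<open>An invariant algebra (A,q): a k-algebra A with an idempotent q.
  Its carrier is the subalgebra {x. q x q = q x}.\<close>
definition inv_alg :: "('a, 'm) ring_scheme \<Rightarrow> ('k::field \<Rightarrow> 'a \<Rightarrow> 'a) \<Rightarrow> 'a \<Rightarrow> bool" where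
  "inv_alg A s q \<longleftrightarrow> kalg A s \<and> q \<in> carrier A \<and> q \<otimes>\<^bsub>A\<^esub> q = q"

definition inv_carrier :: "('a, 'm) ring_scheme \<Rightarrow> 'a \<Rightarrow> 'a set" where
  "inv_carrier A q = {x \<in> carrier A. q \<otimes>\<^bsub>A\<^esub> x \<otimes>\<^bsub>A\<^esub> q = q \<otimes>\<^bsub>A\<^esub> x}"

definition inv_hom ::
  "('a, 'm) ring_scheme \<Rightarrow> ('k::field \<Rightarrow> 'a \<Rightarrow> 'a) \<Rightarrow> 'a \<Rightarrow>
   ('b, 'n) ring_scheme \<Rightarrow> ('k \<Rightarrow> 'b \<Rightarrow> 'b) \<Rightarrow> 'b \<Rightarrow> ('a \<Rightarrow> 'b) \<Rightarrow> bool" where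
  "inv_hom A sA qA B sB qB \<phi> \<longleftrightarrow>
     \<phi> \<in> inv_carrier A qA \<rightarrow> inv_carrier B qB \<and>
     (\<forall>x\<in>inv_carrier A qA. \<forall>y\<in>inv_carrier A qA. \<phi> (x \<oplus>\<^bsub>A\<^esub> y) = \<phi> x \<oplus>\<^bsub>B\<^esub> \<phi> y) \<and>
     (\<forall>c. \<forall>x\<in>inv_carrier A qA. \<phi> (sA c x) = sB c (\<phi> x)) \<and>
     (\<forall>x\<in>inv_carrier A qA. \<forall>y\<in>inv_carrier A qA. \<phi> (x \<otimes>\<^bsub>A\<^esub> y) = \<phi> x \<otimes>\<^bsub>B\<^esub> \<phi> y) \<and>
     \<phi> \<one>\<^bsub>A\<^esub> = \<one>\<^bsub>B\<^esub> \<and>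
     \<phi> qA = qB"

text \<open>Letters: Some x stands for x \<in> X, None stands for the extra symbol q~.
  T(V) is realised as the free associative algebra on these letters: finitely supported
  k-valued functions on words, with concatenation-convolution product.\<close>

definition tens_carrier :: "'x set \<Rightarrow> ('x option list \<Rightarrow> 'k::field) set" where
  "tens_carrier X = {f. finite {w. f w \<noteq> 0} \<and>
                        (\<forall>w. f w \<noteq> 0 \<longrightarrow> set w \<subseteq> Some ` X \<union> {None})}"

definition tens_alg :: "'x set \<Rightarrow> ('x option list \<Rightarrow> 'k::field) ring" where
  "tens_alg X = \<lparr> carrier = tens_carrier X,
       mult = (\<lambda>f g w. \<Sum>i\<in>{0..length w}. f (take i w) * g (drop i w)),
       one = (\<lambda>w. if w = [] then 1 else 0),
       zero = (\<lambda>w. 0),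
       add = (\<lambda>f g w. f w + g w) \<rparr>"

definition tens_smult :: "'k::field \<Rightarrow> ('x option list \<Rightarrow> 'k) \<Rightarrow> ('x option list \<Rightarrow> 'k)" where
  "tens_smult c f = (\<lambda>w. c * f w)"

definition letter :: "'x option \<Rightarrow> ('x option list \<Rightarrow> 'k::field)" where
  "letter a = (\<lambda>w. if w = [a] then 1 else 0)"

definition inv_ideal :: "'x set \<Rightarrow> ('x option list \<Rightarrow> 'k::field) set" where
  "inv_ideal X = genideal (tens_alg X)
     ({letter None \<otimes>\<^bsub>tens_alg X\<^esub> letter None \<ominus>\<^bsub>tens_alg X\<^esub> letter None} \<union>
      {letter None \<otimes>\<^bsub>tens_alg X\<^esub> a \<otimes>\<^bsub>tens_alg X\<^esub> letter None
         \<ominus>\<^bsub>tens_alg X\<^esub> letter None \<otimes>\<^bsub>tens_alg X\<^esub> a | a. a \<in> carrier (tens_alg X)})"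

definition hatA :: "'x set \<Rightarrow> ('x option list \<Rightarrow> 'k::field) set ring" where
  "hatA X = tens_alg X Quot inv_ideal X"

definition hat_smult :: "'x set \<Rightarrow> 'k::field \<Rightarrow> ('x option list \<Rightarrow> 'k) set \<Rightarrow> ('x option list \<Rightarrow> 'k) set" where
  "hat_smult X c C = inv_ideal X +>\<^bsub>tens_alg X\<^esub> tens_smult c (SOME a. a \<in> C)"

definition hat_q :: "'x set \<Rightarrow> ('x option list \<Rightarrow> 'k::field) set" where
  "hat_q X = inv_ideal X +>\<^bsub>tens_alg X\<^esub> letter None"

definition hat_i :: "'x set \<Rightarrow> 'x \<Rightarrow> ('x option list \<Rightarrow> 'k::field) set" where
  "hat_i X x = inv_ideal X +>\<^bsub>tens_alg X\<^esub> letter (Some x)"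

end

theory Submission
  imports Defs
begin

definition conv :: "('x option list \<Rightarrow> 'k::field) \<Rightarrow> ('x option list \<Rightarrow> 'k) \<Rightarrow> 'x option list \<Rightarrow> 'k" where
  "conv f g w = (\<Sum>i\<in>{0..length w}. f (take i w) * g (drop i w))"

definition splits :: "'a list \<Rightarrow> ('a list \<times> 'a list) set" where
  "splits w = {(u,v). u @ v = w}"

lemma splits_eq: "splits w = (\<lambda>i. (take i w, drop i w)) ` {0..length w}"
proof
  show "splits w \<subseteq> (\<lambda>i. (take i w, drop i w)) ` {0..length w}"
  proof
    fix p assume "p \<in> splits w"
    then obtain u v where p: "p = (u,v)" "u @ v = w" by (auto simp: splits_def)
    then show "p \<in> (\<lambda>i. (take i w, drop i w)) ` {0..length w}"
      by (intro image_eqI[where x="length u"]) auto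
  qed
qed (auto simp: splits_def)

lemma finite_splits[simp]: "finite (splits w)"
  by (simp add: splits_eq)

lemma conv_splits: "conv f g w = (\<Sum>(u,v)\<in>splits w. f u * g v)"
proof -
  have "inj_on (\<lambda>i. (take i w, drop i w)) {0..length w}"
    by (intro inj_onI) (auto simp: min_def split: if_splits dest: arg_cong[of _ _ length])
  then show ?thesis
    by (simp add: conv_def splits_eq sum.reindex)
qed

lemma conv_assoc: "conv (conv f g) h = conv f (conv g h)"
proof
  fix w
  have "conv (conv f g) h w = (\<Sum>a\<in>splits w. \<Sum>b\<in>splits (fst a). f (fst b) * g (snd b) * h (snd a))"
    by (simp add: conv_splits sum_distrib_right case_prod_beta)
  also have "\<dots> = (\<Sum>(a,b)\<in>Sigma (splits w) (\<lambda>a. splits (fst a)). f (fst b) * g (snd b) * h (snd a))"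
    by (rule sum.Sigma) auto
  also have "\<dots> = (\<Sum>t\<in>{(u,v,z). u @ v @ z = w}. f (fst t) * g (fst (snd t)) * h (snd (snd t)))"
    by (rule sum.reindex_bij_witness[where i="\<lambda>(u,v,z). ((u@v,z),(u,v))" and j="\<lambda>((a,z),(u,v)). (u,v,z)"])
       (auto simp: splits_def)
  also have "\<dots> = (\<Sum>(a,b)\<in>Sigma (splits w) (\<lambda>a. splits (snd a)). f (fst a) * g (fst b) * h (snd b))"
    by (rule sum.reindex_bij_witness[where i="\<lambda>((u,a),(v,z)). (u,v,z)" and j="\<lambda>(u,v,z). ((u,v@z),(v,z))"])
       (auto simp: splits_def)
  also have "\<dots> = (\<Sum>a\<in>splits w. \<Sum>b\<in>splits (snd a). f (fst a) * g (fst b) * h (snd b))"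
    by (rule sum.Sigma[symmetric]) auto
  also have "\<dots> = conv f (conv g h) w"
    by (simp add: conv_splits sum_distrib_left case_prod_beta mult.assoc)
  finally show "conv (conv f g) h w = conv f (conv g h) w" .
qed

lemma conv_ne0: "conv f g w \<noteq> 0 \<Longrightarrow> \<exists>u v. u @ v = w \<and> f u \<noteq> 0 \<and> g v \<noteq> 0"
proof (rule ccontr)
  assume "conv f g w \<noteq> 0" "\<nexists>u v. u @ v = w \<and> f u \<noteq> 0 \<and> g v \<noteq> 0"
  then have "(\<Sum>(u,v)\<in>splits w. f u * g v) = 0"
    by (intro sum.neutral) (auto simp: splits_def)
  with \<open>conv f g w \<noteq> 0\<close> show False by (simp add: conv_splits)
qed

lemma conv_one_left: "conv (\<lambda>w. if w = [] then 1 else 0) f = f"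
proof
  fix w
  have "conv (\<lambda>w. if w = [] then 1 else 0) f w = (\<Sum>p\<in>splits w. if p = ([],w) then f w else 0)"
    unfolding conv_splits by (rule sum.cong) (auto simp: splits_def split: if_splits)
  also have "\<dots> = f w" using finite_splits[of w] by (subst sum.delta) (auto simp: splits_def)
  finally show "conv (\<lambda>w. if w = [] then 1 else 0) f w = f w" .
qed

lemma conv_one_right: "conv f (\<lambda>w. if w = [] then 1 else 0) = f"
proof
  fix w
  have "conv f (\<lambda>w. if w = [] then 1 else 0) w = (\<Sum>p\<in>splits w. if p = (w,[]) then f w else 0)"
    unfolding conv_splits by (rule sum.cong) (auto simp: splits_def split: if_splits)
  also have "\<dots> = f w" using finite_splits[of w] by (subst sum.delta) (auto simp: splits_def)
  finally show "conv f (\<lambda>w. if w = [] then 1 else 0) w = f w" .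
qed

lemma conv_add_left: "conv (\<lambda>w. f w + g w) h = (\<lambda>w. conv f h w + conv g h w)"
  by (rule ext) (simp add: conv_def distrib_right sum.distrib)

lemma conv_add_right: "conv h (\<lambda>w. f w + g w) = (\<lambda>w. conv h f w + conv h g w)"
  by (rule ext) (simp add: conv_def distrib_left sum.distrib)

lemma conv_smult_left: "conv (\<lambda>w. c * f w) h = (\<lambda>w. c * conv f h w)"
  by (rule ext) (simp add: conv_def sum_distrib_left mult.assoc)

lemma conv_smult_right: "conv h (\<lambda>w. c * f w) = (\<lambda>w. c * conv h f w)"
  by (rule ext) (simp add: conv_def sum_distrib_left mult.left_commute)

lemma tens_simps:
  "carrier (tens_alg X) = tens_carrier X"
  "mult (tens_alg X) = conv"
  "one (tens_alg X) = (\<lambda>w. if w = [] then 1 else 0)"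
  "zero (tens_alg X) = (\<lambda>w. 0)"
  "add (tens_alg X) = (\<lambda>f g w. f w + g w)"
  by (auto simp: tens_alg_def conv_def[abs_def])

definition supp :: "('a \<Rightarrow> 'k::zero) \<Rightarrow> 'a set" where "supp f = {w. f w \<noteq> 0}"

lemma tens_carrier_iff: "f \<in> tens_carrier X \<longleftrightarrow> finite (supp f) \<and> (\<forall>w. f w \<noteq> 0 \<longrightarrow> set w \<subseteq> Some ` X \<union> {None})"
  by (simp add: tens_carrier_def supp_def)


lemma t_conv_closed:
  assumes "f \<in> tens_carrier X" "g \<in> tens_carrier X"
  shows "conv f g \<in> tens_carrier X"
proof -
  have "supp (conv f g) \<subseteq> (\<lambda>(u,v). u @ v) ` (supp f \<times> supp g)"
  proof
    fix w assume "w \<in> supp (conv f g)"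
    then obtain u v where uv: "u @ v = w" "f u \<noteq> 0" "g v \<noteq> 0" using conv_ne0 by (force simp: supp_def)
    then show "w \<in> (\<lambda>(u,v). u @ v) ` (supp f \<times> supp g)"
      by (intro image_eqI[of _ _ "(u,v)"]) (auto simp: supp_def)
  qed
  moreover have "finite ((\<lambda>(u,v). u @ v) ` (supp f \<times> supp g))"
    using assms by (simp add: tens_carrier_iff)
  ultimately have "finite (supp (conv f g))" by (rule finite_subset)
  moreover have "set w \<subseteq> Some ` X \<union> {None}" if nz: "conv f g w \<noteq> 0" for w
  proof -
    obtain u v where uv: "u @ v = w" "f u \<noteq> 0" "g v \<noteq> 0" using conv_ne0[OF nz] by blast
    then have "set u \<subseteq> Some ` X \<union> {None}" "set v \<subseteq> Some ` X \<union> {None}"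
      using assms unfolding tens_carrier_iff by blast+
    then show ?thesis using uv(1) by auto
  qed
  ultimately show ?thesis by (simp add: tens_carrier_iff)
qed


lemma supp_add: "supp (\<lambda>w. f w + g w :: 'k::field) \<subseteq> supp f \<union> supp g"
  by (auto simp: supp_def)

lemma t_add_closed:
  assumes "f \<in> tens_carrier X" "g \<in> tens_carrier X"
  shows "(\<lambda>w. f w + g w) \<in> tens_carrier X"
proof -
  have "finite (supp (\<lambda>w. f w + g w))"
    by (rule finite_subset[OF supp_add]) (use assms in \<open>simp add: tens_carrier_iff\<close>)
  moreover have "set w \<subseteq> Some ` X \<union> {None}" if "f w + g w \<noteq> 0" for w
  proof -
    from that have "f w \<noteq> 0 \<or> g w \<noteq> 0" by auto
    then show ?thesis using assms unfolding tens_carrier_iff by blast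
  qed
  ultimately show ?thesis unfolding tens_carrier_iff by blast
qed

lemma t_smult_closed:
  assumes "f \<in> tens_carrier X"
  shows "(\<lambda>w. c * f w) \<in> tens_carrier X"
proof -
  have "supp (\<lambda>w. c * f w) \<subseteq> supp f" by (auto simp: supp_def)
  then have "finite (supp (\<lambda>w. c * f w))" by (rule finite_subset) (use assms in \<open>simp add: tens_carrier_iff\<close>)
  then show ?thesis using assms unfolding tens_carrier_iff by auto
qed

lemma t_one_closed: "((\<lambda>w. if w = [] then 1 else 0) :: 'x option list \<Rightarrow> 'k::field) \<in> tens_carrier X"
proof -
  have "supp ((\<lambda>w. if w = [] then 1 else 0) :: 'x option list \<Rightarrow> 'k::field) = {[]}" by (auto simp: supp_def)
  then show ?thesis unfolding tens_carrier_iff by (auto split: if_splits)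
qed

lemma t_zero_closed: "(\<lambda>w. 0) \<in> tens_carrier X"
  by (simp add: tens_carrier_iff supp_def)


lemma tens_abelian: "abelian_group (tens_alg X)"
proof (rule abelian_groupI, unfold tens_simps)
  fix f assume f: "f \<in> tens_carrier X"
  then have "(\<lambda>w. (-1) * f w) \<in> tens_carrier X" by (rule t_smult_closed)
  then show "\<exists>y\<in>tens_carrier X. (\<lambda>w. y w + f w) = (\<lambda>w. 0)"
    by (intro bexI[of _ "\<lambda>w. (-1) * f w"]) auto
qed (simp_all add: t_add_closed t_zero_closed ac_simps)

lemma tens_monoid: "monoid (tens_alg X)"
  by (rule monoidI, unfold tens_simps)
     (simp_all add: t_conv_closed t_one_closed conv_assoc conv_one_left conv_one_right)

lemma tens_ring: "ring (tens_alg X)"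
  by (rule ringI[OF tens_abelian tens_monoid], unfold tens_simps)
     (simp_all add: conv_add_left conv_add_right)


definition bas :: "'x option list \<Rightarrow> ('x option list \<Rightarrow> 'k::field)" where
  "bas u = (\<lambda>v. if v = u then 1 else 0)"

abbreviation alph :: "'x set \<Rightarrow> 'x option set" where "alph X \<equiv> Some ` X \<union> {None}"

lemma bas_closed: "set u \<subseteq> alph X \<Longrightarrow> (bas u :: _ \<Rightarrow> 'k::field) \<in> tens_carrier X"
proof -
  assume u: "set u \<subseteq> alph X"
  have "supp (bas u :: _ \<Rightarrow> 'k) = {u}" by (auto simp: supp_def bas_def)
  then show ?thesis using u unfolding tens_carrier_iff by (auto simp: bas_def split: if_splits)
qed

lemma conv_bas:
  fixes u v :: "'x option list"
  shows "conv (bas u) (bas v) = (bas (u @ v) :: _ \<Rightarrow> 'k::field)"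
proof
  fix w
  have "conv (bas u) (bas v) w = (\<Sum>p\<in>splits w. if p = (u,v) then 1 else (0::'k))"
    unfolding conv_splits by (rule sum.cong) (auto simp: bas_def split: if_splits)
  also have "\<dots> = bas (u @ v) w"
    using finite_splits[of w] by (subst sum.delta) (auto simp: splits_def bas_def)
  finally show "conv (bas u) (bas v) w = (bas (u @ v) w :: 'k)" .
qed

lemma bas_Nil: "bas [] = (\<lambda>w. if w = [] then 1 else 0)"
  by (simp add: bas_def)

lemma letter_bas: "letter a = bas [a]"
  by (simp add: letter_def bas_def)

lemma bas_Cons: "bas (a # w) = conv (letter a) (bas w)"
  by (simp add: letter_bas conv_bas)

lemma conv_zero_left: "conv (\<lambda>w. 0) g = (\<lambda>w. 0)"
  by (simp add: conv_def[abs_def])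

lemma conv_zero_right: "conv g (\<lambda>w. 0) = (\<lambda>w. 0)"
  by (simp add: conv_def[abs_def])

lemma tens_induct[consumes 1, case_names zero step]:
  fixes X :: "'x set"
  assumes f: "f \<in> tens_carrier X"
    and zero: "P (\<lambda>w. 0)"
    and step: "\<And>g c u. g \<in> tens_carrier X \<Longrightarrow> set u \<subseteq> alph X \<Longrightarrow> P g \<Longrightarrow> P (\<lambda>v. g v + c * bas u v)"
  shows "P (f :: 'x option list \<Rightarrow> 'k::field)"
proof -
  have "\<forall>f. f \<in> tens_carrier X \<longrightarrow> supp f \<subseteq> S \<longrightarrow> P (f :: 'x option list \<Rightarrow> 'k::field)" if "finite S" for S
    using that
  proof (induction S rule: finite_induct)
    case empty
    show ?case
    proof (intro allI impI)
      fix f :: "'x option list \<Rightarrow> 'k" assume "supp f \<subseteq> {}"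
      then have "f = (\<lambda>w. 0)" by (auto simp: supp_def)
      then show "P f" using zero by simp
    qed
  next
    case (insert u S)
    show ?case
    proof (intro allI impI)
      fix f :: "'x option list \<Rightarrow> 'k" assume fc: "f \<in> tens_carrier X" and sf: "supp f \<subseteq> insert u S"
      show "P f"
      proof (cases "f u = 0")
        case True
        then have "supp f \<subseteq> S" using sf by (auto simp: supp_def)
        then show ?thesis using insert.IH fc by blast
      next
        case False
        then have u: "set u \<subseteq> alph X" using fc by (simp add: tens_carrier_iff)
        define g where "g = f(u := 0)"
        have sg: "supp g \<subseteq> S" using sf by (auto simp: supp_def g_def)
        have "supp g \<subseteq> supp f" by (auto simp: supp_def g_def)
        then have "finite (supp g)" by (rule finite_subset) (use fc in \<open>simp add: tens_carrier_iff\<close>)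
        then have gc: "g \<in> tens_carrier X" using fc by (simp add: tens_carrier_iff g_def)
        have "P (\<lambda>v. g v + f u * bas u v)" by (rule step[OF gc u]) (use insert.IH gc sg in blast)
        moreover have "(\<lambda>v. g v + f u * bas u v) = f" by (auto simp: g_def bas_def)
        ultimately show ?thesis by simp
      qed
    qed
  qed
  then show ?thesis using f by (auto simp: tens_carrier_iff)
qed

lemma tens_minus: "f \<in> tens_carrier X \<Longrightarrow> \<ominus>\<^bsub>tens_alg X\<^esub> f = (\<lambda>w. - f w)"
proof -
  assume f: "f \<in> tens_carrier X"
  interpret ring "tens_alg X" by (rule tens_ring)
  have m: "(\<lambda>w. - f w) \<in> tens_carrier X" using t_smult_closed[OF f, of "-1"] by simp
  show ?thesis by (rule minus_equality) (use f m in \<open>simp_all add: tens_simps\<close>)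
qed

lemma tens_sub: "f \<in> tens_carrier X \<Longrightarrow> g \<in> tens_carrier X \<Longrightarrow> f \<ominus>\<^bsub>tens_alg X\<^esub> g = (\<lambda>w. f w - g w)"
  by (simp add: a_minus_def tens_minus tens_simps)

lemma letter_closed: "a \<in> alph X \<Longrightarrow> letter a \<in> tens_carrier X"
  by (simp add: letter_bas bas_closed)


abbreviation pi :: "'x set \<Rightarrow> ('x option list \<Rightarrow> 'k::field) \<Rightarrow> ('x option list \<Rightarrow> 'k) set" where
  "pi X a \<equiv> inv_ideal X +>\<^bsub>tens_alg X\<^esub> a"

lemma gens_sub:
  "({letter None \<otimes>\<^bsub>tens_alg X\<^esub> letter None \<ominus>\<^bsub>tens_alg X\<^esub> letter None} \<union>
      {letter None \<otimes>\<^bsub>tens_alg X\<^esub> a \<otimes>\<^bsub>tens_alg X\<^esub> letter None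
         \<ominus>\<^bsub>tens_alg X\<^esub> letter None \<otimes>\<^bsub>tens_alg X\<^esub> a | a. a \<in> carrier (tens_alg X)})
   \<subseteq> carrier (tens_alg (X::'x set) :: ('x option list \<Rightarrow> 'k::field) ring)"
proof -
  interpret ring "tens_alg X :: ('x option list \<Rightarrow> 'k::field) ring" by (rule tens_ring)
  have l: "letter None \<in> carrier (tens_alg X :: ('x option list \<Rightarrow> 'k::field) ring)"
    by (simp add: tens_simps letter_closed)
  show ?thesis using l by auto
qed

lemma inv_ideal_ideal: "ideal (inv_ideal X) (tens_alg X :: ('x option list \<Rightarrow> 'k::field) ring)"
proof -
  interpret ring "tens_alg X :: ('x option list \<Rightarrow> 'k::field) ring" by (rule tens_ring)
  show ?thesis unfolding inv_ideal_def by (rule genideal_ideal[OF gens_sub])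
qed

lemma gen1_in: "letter None \<otimes>\<^bsub>tens_alg X\<^esub> letter None \<ominus>\<^bsub>tens_alg X\<^esub> letter None \<in> (inv_ideal X :: ('x option list \<Rightarrow> 'k::field) set)"
proof -
  interpret ring "tens_alg X :: ('x option list \<Rightarrow> 'k::field) ring" by (rule tens_ring)
  show ?thesis unfolding inv_ideal_def using genideal_self[OF gens_sub] by blast
qed

lemma gen2_in: "a \<in> carrier (tens_alg X) \<Longrightarrow> letter None \<otimes>\<^bsub>tens_alg X\<^esub> a \<otimes>\<^bsub>tens_alg X\<^esub> letter None
         \<ominus>\<^bsub>tens_alg X\<^esub> letter None \<otimes>\<^bsub>tens_alg X\<^esub> a \<in> (inv_ideal X :: ('x option list \<Rightarrow> 'k::field) set)"
proof -
  assume a: "a \<in> carrier (tens_alg X)"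
  interpret ring "tens_alg X :: ('x option list \<Rightarrow> 'k::field) ring" by (rule tens_ring)
  show ?thesis unfolding inv_ideal_def using genideal_self[OF gens_sub] a by blast
qed

lemma hatA_ring: "ring (hatA X :: ('x option list \<Rightarrow> 'k::field) set ring)"
  unfolding hatA_def by (rule ideal.quotient_is_ring[OF inv_ideal_ideal])

lemma pi_hom: "pi X \<in> ring_hom (tens_alg X) (hatA X :: ('x option list \<Rightarrow> 'k::field) set ring)"
  unfolding hatA_def by (rule ideal.rcos_ring_hom[OF inv_ideal_ideal])

lemma pi_closed: "a \<in> tens_carrier X \<Longrightarrow> pi X (a :: 'x option list \<Rightarrow> 'k::field) \<in> carrier (hatA X)"
  using ring_hom_closed[OF pi_hom] by (simp add: tens_simps)

lemma pi_add: "a \<in> tens_carrier X \<Longrightarrow> b \<in> tens_carrier X \<Longrightarrow>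
   pi X a \<oplus>\<^bsub>hatA X\<^esub> pi X b = pi X (\<lambda>w. a w + b w :: 'k::field)"
  using ring_hom_add[OF pi_hom, of a X b] by (simp add: tens_simps)

lemma pi_mult: "a \<in> tens_carrier X \<Longrightarrow> b \<in> tens_carrier X \<Longrightarrow>
   pi X a \<otimes>\<^bsub>hatA X\<^esub> pi X b = pi X (conv a b :: _ \<Rightarrow> 'k::field)"
  using ring_hom_mult[OF pi_hom, of a X b] by (simp add: tens_simps)

lemma pi_one:
  fixes X :: "'x set"
  shows "\<one>\<^bsub>hatA X\<^esub> = pi X (bas [] :: _ \<Rightarrow> 'k::field)"
proof -
  have "pi X \<one>\<^bsub>tens_alg X\<^esub> = (\<one>\<^bsub>hatA X\<^esub> :: ('x option list \<Rightarrow> 'k::field) set)"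
    by (rule ring_hom_one[OF pi_hom])
  then show ?thesis by (simp add: tens_simps bas_Nil)
qed

lemma hatA_carrier: "C \<in> carrier (hatA X) \<Longrightarrow> \<exists>a\<in>tens_carrier X. C = pi X (a :: 'x option list \<Rightarrow> 'k::field)"
  by (auto simp: hatA_def FactRing_def A_RCOSETS_def' tens_simps)

lemma pi_eq:
  fixes X :: "'x set"
  assumes "a \<in> tens_carrier X" "b \<in> tens_carrier X" "(\<lambda>w. a w - b w) \<in> inv_ideal X"
  shows "pi X a = pi X (b :: 'x option list \<Rightarrow> 'k::field)"
proof -
  interpret I: ideal "inv_ideal X" "tens_alg X :: ('x option list \<Rightarrow> 'k::field) ring" by (rule inv_ideal_ideal)
  have "a = (\<lambda>w. a w - b w) \<oplus>\<^bsub>tens_alg X\<^esub> b" by (simp add: tens_simps)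
  then have "a \<in> pi X b" using assms by (auto simp: a_r_coset_def')
  then show ?thesis using I.a_repr_independence[of a "inv_ideal X" b] assms I.a_subgroup
    by (simp add: tens_simps)
qed

lemma ideal_smult:
  fixes X :: "'x set"
  assumes "h \<in> inv_ideal X"
  shows "(\<lambda>w. c * h w) \<in> (inv_ideal X :: ('x option list \<Rightarrow> 'k::field) set)"
proof -
  interpret I: ideal "inv_ideal X" "tens_alg X :: ('x option list \<Rightarrow> 'k::field) ring" by (rule inv_ideal_ideal)
  have "(\<lambda>w. c * bas [] w) \<in> tens_carrier X" by (rule t_smult_closed) (simp add: bas_closed)
  then have "conv (\<lambda>w. c * bas [] w) h \<in> inv_ideal X" using I.I_l_closed[OF assms] by (simp add: tens_simps)
  then show ?thesis by (simp add: conv_smult_left bas_Nil conv_one_left)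
qed

lemma pi_smult:
  fixes X :: "'x set"
  assumes a: "a \<in> tens_carrier X"
  shows "hat_smult X c (pi X a) = pi X (\<lambda>w. c * a w :: 'k::field)"
proof -
  interpret I: ideal "inv_ideal X" "tens_alg X :: ('x option list \<Rightarrow> 'k::field) ring" by (rule inv_ideal_ideal)
  have "a \<in> pi X a" using I.a_rcos_self a by (simp add: tens_simps)
  then have "(SOME b. b \<in> pi X a) \<in> pi X a" by (metis someI)
  then obtain h where h: "h \<in> inv_ideal X" and b: "(SOME b. b \<in> pi X a) = h \<oplus>\<^bsub>tens_alg X\<^esub> a"
    by (auto simp: a_r_coset_def')
  have hc: "h \<in> tens_carrier X" using h I.a_subset by (auto simp: tens_simps)
  have "tens_smult c (SOME b. b \<in> pi X a) = (\<lambda>w. c * h w + c * a w)"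
    by (simp add: b tens_smult_def tens_simps distrib_left)
  moreover have "pi X (\<lambda>w. c * h w + c * a w) = pi X (\<lambda>w. c * a w)"
    by (rule pi_eq) (auto intro!: t_add_closed t_smult_closed a hc ideal_smult h)
  ultimately show ?thesis by (simp add: hat_smult_def)
qed


lemmas tc_closed = t_add_closed t_smult_closed t_conv_closed

lemma hatA_kalg:
  fixes X :: "'x set"
  shows "kalg (hatA X :: ('x option list \<Rightarrow> 'k::field) set ring) (hat_smult X)"
  unfolding kalg_def
proof (intro conjI allI ballI)
  show "ring (hatA X :: ('x option list \<Rightarrow> 'k::field) set ring)" by (rule hatA_ring)
next
  fix c :: 'k and x :: "('x option list \<Rightarrow> 'k) set" assume "x \<in> carrier (hatA X)"
  then obtain a where a: "a \<in> tens_carrier X" "x = pi X a" using hatA_carrier by blast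
  show "hat_smult X c x \<in> carrier (hatA X)" using a by (simp add: pi_smult pi_closed tc_closed)
  show "hat_smult X 1 x = x" using a by (simp add: pi_smult)
  fix d
  show "hat_smult X (c + d) x = hat_smult X c x \<oplus>\<^bsub>hatA X\<^esub> hat_smult X d x"
    using a by (simp add: pi_smult pi_add tc_closed distrib_right)
  show "hat_smult X (c * d) x = hat_smult X c (hat_smult X d x)"
    using a by (simp add: pi_smult tc_closed mult.assoc)
next
  fix c :: 'k and x y :: "('x option list \<Rightarrow> 'k) set" assume "x \<in> carrier (hatA X)" "y \<in> carrier (hatA X)"
  then obtain a b where a: "a \<in> tens_carrier X" "x = pi X a" and b: "b \<in> tens_carrier X" "y = pi X b"
    using hatA_carrier by metis
  show "hat_smult X c (x \<oplus>\<^bsub>hatA X\<^esub> y) = hat_smult X c x \<oplus>\<^bsub>hatA X\<^esub> hat_smult X c y"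
    using a b by (simp add: pi_smult pi_add tc_closed distrib_left)
  show "hat_smult X c (x \<otimes>\<^bsub>hatA X\<^esub> y) = hat_smult X c x \<otimes>\<^bsub>hatA X\<^esub> y"
    using a b by (simp add: pi_smult pi_mult tc_closed conv_smult_left conv_smult_right)
  show "hat_smult X c (x \<otimes>\<^bsub>hatA X\<^esub> y) = x \<otimes>\<^bsub>hatA X\<^esub> hat_smult X c y"
    using a b by (simp add: pi_smult pi_mult tc_closed conv_smult_left conv_smult_right)
qed

lemma hatA_invariant:
  fixes X :: "'x set"
  assumes "x \<in> carrier (hatA X :: ('x option list \<Rightarrow> 'k::field) set ring)"
  shows "hat_q X \<otimes>\<^bsub>hatA X\<^esub> x \<otimes>\<^bsub>hatA X\<^esub> hat_q X = hat_q X \<otimes>\<^bsub>hatA X\<^esub> x"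
proof -
  obtain a where a: "a \<in> tens_carrier X" "x = pi X a" using hatA_carrier assms by blast
  have l: "letter None \<in> (tens_carrier X :: ('x option list \<Rightarrow> 'k) set)" by (simp add: letter_closed)
  have "pi X (conv (conv (letter None) a) (letter None)) = pi X (conv (letter None) a)"
    by (rule pi_eq) (use gen2_in[of a X] a l in \<open>simp_all add: tens_simps tens_sub tc_closed\<close>)
  then show ?thesis using a l by (simp add: hat_q_def pi_mult tc_closed)
qed

lemma hatA_inv_carrier:
  fixes X :: "'x set"
  shows "inv_carrier (hatA X :: ('x option list \<Rightarrow> 'k::field) set ring) (hat_q X) = carrier (hatA X)"
  using hatA_invariant unfolding inv_carrier_def by blast

lemma hatA_inv_alg:
  fixes X :: "'x set"
  shows "inv_alg (hatA X :: ('x option list \<Rightarrow> 'k::field) set ring) (hat_smult X) (hat_q X)"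
proof -
  have l: "letter None \<in> (tens_carrier X :: ('x option list \<Rightarrow> 'k) set)" by (simp add: letter_closed)
  have g: "letter None \<otimes>\<^bsub>tens_alg X\<^esub> letter None \<ominus>\<^bsub>tens_alg X\<^esub> letter None \<in> (inv_ideal X :: ('x option list \<Rightarrow> 'k) set)"
    by (rule gen1_in)
  have "pi X (conv (letter None) (letter None)) = pi X (letter None :: _ \<Rightarrow> 'k)"
    by (rule pi_eq) (use g l in \<open>simp_all add: tens_simps tens_sub tc_closed\<close>)
  then show ?thesis unfolding inv_alg_def using l
    by (simp add: hatA_kalg hat_q_def pi_closed pi_mult)
qed

lemma hat_i_in:
  fixes X :: "'x set"
  shows "hat_i X \<in> X \<rightarrow> inv_carrier (hatA X :: ('x option list \<Rightarrow> 'k::field) set ring) (hat_q X)"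
  by (auto simp: hatA_inv_carrier hat_i_def intro!: pi_closed letter_closed)


locale ctx = ring A for A :: "('a,'m) ring_scheme" (structure) +
  fixes X :: "'x set" and s :: "'k::field \<Rightarrow> 'a \<Rightarrow> 'a" and q :: 'a and \<theta> :: "'x \<Rightarrow> 'a"
  assumes ka: "kalg A s" and qc: "q \<in> carrier A" and qq: "q \<otimes> q = q"
    and th: "\<theta> \<in> X \<rightarrow> inv_carrier A q"
begin

lemma s_closed[simp]: "x \<in> carrier A \<Longrightarrow> s c x \<in> carrier A"
  using ka by (simp add: kalg_def)
lemma s_add_l: "x \<in> carrier A \<Longrightarrow> s (c + d) x = s c x \<oplus> s d x"
  using ka by (simp add: kalg_def)
lemma s_add_r: "x \<in> carrier A \<Longrightarrow> y \<in> carrier A \<Longrightarrow> s c (x \<oplus> y) = s c x \<oplus> s c y"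
  using ka by (simp add: kalg_def)
lemma s_mult: "x \<in> carrier A \<Longrightarrow> s (c * d) x = s c (s d x)"
  using ka by (simp add: kalg_def)
lemma s_one[simp]: "x \<in> carrier A \<Longrightarrow> s 1 x = x"
  using ka by (simp add: kalg_def)
lemma s_ml: "x \<in> carrier A \<Longrightarrow> y \<in> carrier A \<Longrightarrow> s c (x \<otimes> y) = s c x \<otimes> y"
  using ka by (simp add: kalg_def)
lemma s_mr: "x \<in> carrier A \<Longrightarrow> y \<in> carrier A \<Longrightarrow> s c (x \<otimes> y) = x \<otimes> s c y"
  using ka unfolding kalg_def by blast

lemma s_zero[simp]: "x \<in> carrier A \<Longrightarrow> s 0 x = \<zero>"
proof -
  assume x: "x \<in> carrier A"
  have "s 0 x \<oplus> s 0 x = s 0 x" using s_add_l[OF x, of 0 0] x by simp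
  then show ?thesis using add.l_cancel_one[of "s 0 x" "s 0 x"] x by simp
qed

lemma s_zero2[simp]: "s c \<zero> = \<zero>"
proof -
  have "s c \<zero> \<oplus> s c \<zero> = s c \<zero>" using s_add_r[of \<zero> \<zero> c] by simp
  then show ?thesis using add.l_cancel_one[of "s c \<zero>" "s c \<zero>"] by simp
qed

lemma s_finsum:
  assumes "finite S" "F \<in> S \<rightarrow> carrier A"
  shows "s c (finsum A F S) = finsum A (\<lambda>w. s c (F w)) S"
  using assms
proof (induction S rule: finite_induct)
  case empty then show ?case by simp
next
  case (insert x S)
  then show ?case by (simp add: finsum_insert s_add_r Pi_def)
qed

abbreviation IC where "IC \<equiv> inv_carrier A q"

lemma IC_carrier: "x \<in> IC \<Longrightarrow> x \<in> carrier A"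
  by (simp add: inv_carrier_def)

lemma IC_eq: "x \<in> IC \<Longrightarrow> q \<otimes> x \<otimes> q = q \<otimes> x"
  by (simp add: inv_carrier_def)

lemma IC_one: "\<one> \<in> IC"
  using qc qq by (simp add: inv_carrier_def)

lemma IC_zero: "\<zero> \<in> IC"
  using qc by (simp add: inv_carrier_def)

lemma IC_q: "q \<in> IC"
  using qc qq by (simp add: inv_carrier_def)

lemma IC_add: "x \<in> IC \<Longrightarrow> y \<in> IC \<Longrightarrow> x \<oplus> y \<in> IC"
  using qc by (simp add: inv_carrier_def l_distr r_distr)

lemma IC_mult: "x \<in> IC \<Longrightarrow> y \<in> IC \<Longrightarrow> x \<otimes> y \<in> IC"
proof -
  assume x: "x \<in> IC" and y: "y \<in> IC"
  have xc: "x \<in> carrier A" and yc: "y \<in> carrier A" using x y by (auto simp: inv_carrier_def)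
  have ex: "q \<otimes> x \<otimes> q = q \<otimes> x" and ey: "q \<otimes> y \<otimes> q = q \<otimes> y" using x y by (auto simp: inv_carrier_def)
  have "q \<otimes> (x \<otimes> y) \<otimes> q = (q \<otimes> x) \<otimes> (y \<otimes> q)" using xc yc qc by (simp add: m_assoc)
  also have "\<dots> = (q \<otimes> x \<otimes> q) \<otimes> (y \<otimes> q)" using ex by simp
  also have "\<dots> = (q \<otimes> x) \<otimes> (q \<otimes> y \<otimes> q)" using xc yc qc by (simp add: m_assoc)
  also have "\<dots> = (q \<otimes> x) \<otimes> (q \<otimes> y)" using ey by simp
  also have "\<dots> = (q \<otimes> x \<otimes> q) \<otimes> y" using xc yc qc by (simp add: m_assoc)
  also have "\<dots> = q \<otimes> (x \<otimes> y)" using xc yc qc ex by (simp add: m_assoc)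
  finally show ?thesis using xc yc by (simp add: inv_carrier_def)
qed

lemma IC_s: "x \<in> IC \<Longrightarrow> s c x \<in> IC"
proof -
  assume x: "x \<in> IC"
  have xc: "x \<in> carrier A" using x by (simp add: inv_carrier_def)
  have "s c (q \<otimes> x \<otimes> q) = s c (q \<otimes> x) \<otimes> q" using xc qc by (intro s_ml) auto
  also have "\<dots> = q \<otimes> s c x \<otimes> q" using xc qc s_mr[of q x c] by simp
  finally have "q \<otimes> s c x \<otimes> q = s c (q \<otimes> x \<otimes> q)" by simp
  also have "\<dots> = s c (q \<otimes> x)" using x by (simp add: inv_carrier_def)
  also have "\<dots> = q \<otimes> s c x" using xc qc s_mr[of q x c] by simp
  finally show ?thesis using xc by (simp add: inv_carrier_def)
qed

lemma IC_finsum: "finite S \<Longrightarrow> F \<in> S \<rightarrow> IC \<Longrightarrow> finsum A F S \<in> IC"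
proof (induction S rule: finite_induct)
  case empty then show ?case by (simp add: IC_zero)
next
  case (insert x S)
  then have "F \<in> insert x S \<rightarrow> carrier A" using IC_carrier by blast
  with insert show ?case by (simp add: finsum_insert IC_add Pi_def)
qed

definition lv :: "'x option \<Rightarrow> 'a" where
  "lv l = (case l of None \<Rightarrow> q | Some x \<Rightarrow> if x \<in> X then \<theta> x else \<zero>)"

definition wv :: "'x option list \<Rightarrow> 'a" where
  "wv w = foldr (\<lambda>l r. lv l \<otimes> r) w \<one>"

definition Phi :: "('x option list \<Rightarrow> 'k) \<Rightarrow> 'a" where
  "Phi f = (\<Oplus>w\<in>supp f. s (f w) (wv w))"

lemma lv_IC: "lv l \<in> IC"
  using th by (auto simp: lv_def IC_q IC_zero split: option.splits)

lemma wv_IC: "wv w \<in> IC"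
  by (induction w) (simp_all add: wv_def IC_one IC_mult lv_IC)

lemma wv_closed[simp]: "wv w \<in> carrier A"
  using wv_IC IC_carrier by blast

lemma lv_closed[simp]: "lv l \<in> carrier A"
  using lv_IC IC_carrier by blast

lemma wv_Nil[simp]: "wv [] = \<one>"
  by (simp add: wv_def)

lemma wv_Cons[simp]: "wv (l # w) = lv l \<otimes> wv w"
  by (simp add: wv_def)

lemma wv_append: "wv (u @ v) = wv u \<otimes> wv v"
  by (induction u) (simp_all add: m_assoc)

lemma Phi_sup:
  assumes "finite S" "supp f \<subseteq> S"
  shows "Phi f = (\<Oplus>w\<in>S. s (f w) (wv w))"
  unfolding Phi_def
  by (rule add.finprod_mono_neutral_cong_left) (use assms in \<open>auto simp: supp_def\<close>)

end


context ctx
begin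

lemma Phi_add:
  assumes f: "f \<in> tens_carrier X" and g: "g \<in> tens_carrier X"
  shows "Phi (\<lambda>w. f w + g w) = Phi f \<oplus> Phi g"
proof -
  have fin: "finite (supp f \<union> supp g)" using f g by (simp add: tens_carrier_iff)
  have "Phi (\<lambda>w. f w + g w) = (\<Oplus>w\<in>supp f \<union> supp g. s (f w + g w) (wv w))"
    by (rule Phi_sup[OF fin supp_add])
  also have "\<dots> = (\<Oplus>w\<in>supp f \<union> supp g. s (f w) (wv w) \<oplus> s (g w) (wv w))"
    by (simp add: s_add_l)
  also have "\<dots> = (\<Oplus>w\<in>supp f \<union> supp g. s (f w) (wv w)) \<oplus> (\<Oplus>w\<in>supp f \<union> supp g. s (g w) (wv w))"
    by (rule finsum_addf) auto
  also have "\<dots> = Phi f \<oplus> Phi g"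
    using Phi_sup[OF fin, of f] Phi_sup[OF fin, of g] by simp
  finally show ?thesis .
qed

lemma Phi_smult:
  assumes f: "f \<in> tens_carrier X"
  shows "Phi (\<lambda>w. c * f w) = s c (Phi f)"
proof -
  have fin: "finite (supp f)" using f by (simp add: tens_carrier_iff)
  have sub: "supp (\<lambda>w. c * f w) \<subseteq> supp f" by (auto simp: supp_def)
  have "Phi (\<lambda>w. c * f w) = (\<Oplus>w\<in>supp f. s (c * f w) (wv w))"
    by (rule Phi_sup[OF fin sub])
  also have "\<dots> = (\<Oplus>w\<in>supp f. s c (s (f w) (wv w)))"
    by (simp add: s_mult)
  also have "\<dots> = s c (Phi f)"
    unfolding Phi_def by (rule s_finsum[symmetric]) (auto simp: fin)
  finally show ?thesis .
qed

lemma Phi_bas: "Phi (bas u) = wv u"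
proof -
  have "Phi (bas u) = (\<Oplus>w\<in>{u}. s (bas u w) (wv w))"
    by (rule Phi_sup) (auto simp: supp_def bas_def)
  then show ?thesis by (simp add: finsum_insert bas_def)
qed

lemma Phi_zero: "Phi (\<lambda>w. 0) = \<zero>"
  by (simp add: Phi_def supp_def)

lemma Phi_IC: "f \<in> tens_carrier X \<Longrightarrow> Phi f \<in> IC"
  unfolding Phi_def
  by (rule IC_finsum) (auto simp: tens_carrier_iff intro: IC_s wv_IC)

lemma Phi_closed[simp]: "f \<in> tens_carrier X \<Longrightarrow> Phi f \<in> carrier A"
  using Phi_IC IC_carrier by blast

lemma Phi_conv_bas:
  assumes u: "set u \<subseteq> alph X" and g: "g \<in> tens_carrier X"
  shows "Phi (conv (bas u) g) = wv u \<otimes> Phi g"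
  using g
proof (induction g rule: tens_induct)
  case zero
  then show ?case by (simp add: conv_zero_right Phi_zero)
next
  case (step g c w)
  have bu: "bas u \<in> tens_carrier X" using u by (rule bas_closed)
  have bw: "bas w \<in> tens_carrier X" using step by (simp add: bas_closed)
  have buw: "bas (u @ w) \<in> tens_carrier X" using u step by (simp add: bas_closed)
  have "conv (bas u) (\<lambda>v. g v + c * bas w v) = (\<lambda>v. conv (bas u) g v + c * bas (u @ w) v)"
    by (simp add: conv_add_right conv_smult_right conv_bas)
  moreover have "Phi (\<lambda>v. conv (bas u) g v + c * bas (u @ w) v) = Phi (conv (bas u) g) \<oplus> Phi (\<lambda>v. c * bas (u @ w) v)"
    by (rule Phi_add) (use bu step buw in \<open>auto intro: t_conv_closed t_smult_closed\<close>)
  ultimately have "Phi (conv (bas u) (\<lambda>v. g v + c * bas w v)) = Phi (conv (bas u) g) \<oplus> s c (wv (u @ w))"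
    using Phi_smult[OF buw, of c] by (simp add: Phi_bas)
  also have "\<dots> = wv u \<otimes> Phi g \<oplus> wv u \<otimes> s c (wv w)"
    using step by (simp add: wv_append s_mr)
  also have "\<dots> = wv u \<otimes> Phi (\<lambda>v. g v + c * bas w v)"
  proof -
    have e: "Phi (\<lambda>v. g v + c * bas w v) = Phi g \<oplus> s c (wv w)"
      using Phi_add[OF step(1) t_smult_closed[OF bw, of c]] Phi_smult[OF bw, of c] by (simp add: Phi_bas)
    show ?thesis using step by (simp add: e r_distr)
  qed
  finally show ?case .
qed

lemma Phi_conv:
  assumes f: "f \<in> tens_carrier X" and g: "g \<in> tens_carrier X"
  shows "Phi (conv f g) = Phi f \<otimes> Phi g"
  using f
proof (induction f rule: tens_induct)
  case zero
  then show ?case using g by (simp add: conv_zero_left Phi_zero)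
next
  case (step f c u)
  have bu: "bas u \<in> tens_carrier X" using step by (simp add: bas_closed)
  have "conv (\<lambda>v. f v + c * bas u v) g = (\<lambda>v. conv f g v + c * conv (bas u) g v)"
    by (simp add: conv_add_left conv_smult_left)
  moreover have "Phi (\<lambda>v. conv f g v + c * conv (bas u) g v) = Phi (conv f g) \<oplus> Phi (\<lambda>v. c * conv (bas u) g v)"
    by (rule Phi_add) (use bu step g in \<open>auto intro: t_conv_closed t_smult_closed\<close>)
  ultimately have "Phi (conv (\<lambda>v. f v + c * bas u v) g) = Phi (conv f g) \<oplus> s c (Phi (conv (bas u) g))"
    using Phi_smult[OF t_conv_closed[OF bu g], of c] by simp
  also have "\<dots> = Phi f \<otimes> Phi g \<oplus> s c (wv u) \<otimes> Phi g"
    using step g by (simp add: Phi_conv_bas s_ml)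
  also have "\<dots> = Phi (\<lambda>v. f v + c * bas u v) \<otimes> Phi g"
  proof -
    have e: "Phi (\<lambda>v. f v + c * bas u v) = Phi f \<oplus> s c (wv u)"
      using Phi_add[OF step(1) t_smult_closed[OF bu, of c]] Phi_smult[OF bu, of c] by (simp add: Phi_bas)
    show ?thesis using step g by (simp add: e l_distr)
  qed
  finally show ?case .
qed

lemma Phi_hom: "Phi \<in> ring_hom (tens_alg X) A"
  by (rule ring_hom_memI) (simp_all add: tens_simps Phi_conv Phi_add bas_Nil[symmetric] Phi_bas)

end


context ctx
begin

lemma Phi_letter_None: "Phi (letter None) = q"
  using qc by (simp add: letter_bas Phi_bas lv_def)

lemma Phi_letter_Some: "x \<in> X \<Longrightarrow> Phi (letter (Some x)) = \<theta> x"
proof -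
  assume x: "x \<in> X"
  have "\<theta> x \<in> carrier A" using th x IC_carrier by (auto simp: Pi_iff)
  then show ?thesis using x by (simp add: letter_bas Phi_bas lv_def)
qed

lemma Phi_hom_ring: "ring_hom_ring (tens_alg X) A Phi"
  by (rule ring_hom_ringI2[OF tens_ring ring_axioms Phi_hom])

lemma ideal_kernel: "inv_ideal X \<subseteq> a_kernel (tens_alg X) A Phi"
proof -
  interpret H: ring_hom_ring "tens_alg X" A Phi by (rule Phi_hom_ring)
  have l: "letter None \<in> carrier (tens_alg X :: ('x option list \<Rightarrow> 'k) ring)" by (simp add: tens_simps letter_closed)
  have sub: "Phi (x \<ominus>\<^bsub>tens_alg X\<^esub> y) = Phi x \<ominus> Phi y"
    if "x \<in> carrier (tens_alg X)" "y \<in> carrier (tens_alg X)" for x y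
  proof -
    have "Phi (x \<ominus>\<^bsub>tens_alg X\<^esub> y) = Phi x \<oplus> Phi (\<ominus>\<^bsub>tens_alg X\<^esub> y)"
      unfolding a_minus_def by (rule ring_hom_add[OF Phi_hom that(1) H.R.a_inv_closed[OF that(2)]])
    also have "Phi (\<ominus>\<^bsub>tens_alg X\<^esub> y) = \<ominus> Phi y" by (rule H.hom_a_inv[OF that(2)])
    finally show ?thesis by (simp add: a_minus_def)
  qed
  have mu: "Phi (x \<otimes>\<^bsub>tens_alg X\<^esub> y) = Phi x \<otimes> Phi y"
    if "x \<in> carrier (tens_alg X)" "y \<in> carrier (tens_alg X)" for x y
    by (rule ring_hom_mult[OF Phi_hom that])
  have lq: "Phi (letter None) = q" by (rule Phi_letter_None)
  show ?thesis unfolding inv_ideal_def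
  proof (rule H.R.genideal_minimal[OF H.kernel_is_ideal], rule subsetI)
    fix z :: "'x option list \<Rightarrow> 'k" assume "z \<in> {letter None \<otimes>\<^bsub>tens_alg X\<^esub> letter None \<ominus>\<^bsub>tens_alg X\<^esub> letter None} \<union>
      {letter None \<otimes>\<^bsub>tens_alg X\<^esub> a \<otimes>\<^bsub>tens_alg X\<^esub> letter None
         \<ominus>\<^bsub>tens_alg X\<^esub> letter None \<otimes>\<^bsub>tens_alg X\<^esub> a | a. a \<in> carrier (tens_alg X)}"
    then consider "z = letter None \<otimes>\<^bsub>tens_alg X\<^esub> letter None \<ominus>\<^bsub>tens_alg X\<^esub> letter None"
      | a where "a \<in> carrier (tens_alg X)" "z = letter None \<otimes>\<^bsub>tens_alg X\<^esub> a \<otimes>\<^bsub>tens_alg X\<^esub> letter None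
         \<ominus>\<^bsub>tens_alg X\<^esub> letter None \<otimes>\<^bsub>tens_alg X\<^esub> a" by blast
    then show "z \<in> a_kernel (tens_alg X) A Phi"
    proof cases
      case 1
      have zc: "z \<in> carrier (tens_alg X)" using 1 l by (simp add: H.R.minus_closed H.R.m_closed)
      have "Phi z = Phi (letter None \<otimes>\<^bsub>tens_alg X\<^esub> letter None) \<ominus> Phi (letter None)"
        unfolding 1 by (rule sub[OF H.R.m_closed[OF l l] l])
      also have "\<dots> = q \<otimes> q \<ominus> q" by (simp only: mu[OF l l] lq)
      also have "\<dots> = \<zero>" unfolding qq a_minus_def by (rule r_neg[OF qc])
      finally have "Phi z = \<zero>" .
      then show ?thesis using zc unfolding a_kernel_def' by blast
    next
      case 2
      have zc: "z \<in> carrier (tens_alg X)" using 2 l by (simp add: H.R.minus_closed H.R.m_closed)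
      have pa: "Phi a \<in> carrier A" using 2 by (simp add: tens_simps)
      have e: "q \<otimes> Phi a \<otimes> q = q \<otimes> Phi a" using Phi_IC[of a] 2 IC_eq by (simp add: tens_simps)
      have ac: "a \<in> carrier (tens_alg X)" using 2 by simp
      have "Phi z = Phi (letter None \<otimes>\<^bsub>tens_alg X\<^esub> a \<otimes>\<^bsub>tens_alg X\<^esub> letter None) \<ominus> Phi (letter None \<otimes>\<^bsub>tens_alg X\<^esub> a)"
        unfolding 2(2) by (rule sub[OF H.R.m_closed[OF H.R.m_closed[OF l ac] l] H.R.m_closed[OF l ac]])
      also have "\<dots> = q \<otimes> Phi a \<otimes> q \<ominus> q \<otimes> Phi a"
        by (simp only: mu[OF H.R.m_closed[OF l ac] l] mu[OF l ac] lq)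
      also have "\<dots> = \<zero>" unfolding e a_minus_def by (rule r_neg) (use qc pa in simp)
      finally have "Phi z = \<zero>" .
      then show ?thesis using zc unfolding a_kernel_def' by blast
    qed
  qed
qed

end

context ctx begin
definition phi :: "('x option list \<Rightarrow> 'k) set \<Rightarrow> 'a" where
  "phi C = Phi (SOME a. a \<in> C)"

lemma phi_pi:
  assumes a: "a \<in> tens_carrier X"
  shows "phi (pi X a) = Phi a"
proof -
  interpret I: ideal "inv_ideal X" "tens_alg X" by (rule inv_ideal_ideal)
  have "a \<in> pi X a" using I.a_rcos_self a by (simp add: tens_simps)
  then have "(SOME b. b \<in> pi X a) \<in> pi X a" by (metis someI)
  then obtain h where h: "h \<in> inv_ideal X" and b: "(SOME b. b \<in> pi X a) = h \<oplus>\<^bsub>tens_alg X\<^esub> a"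
    by (auto simp: a_r_coset_def')
  have hc: "h \<in> tens_carrier X" and h0: "Phi h = \<zero>"
    using h ideal_kernel by (auto simp: a_kernel_def' tens_simps)
  show ?thesis using a hc h0 by (simp add: phi_def b tens_simps Phi_add)
qed

lemma phi_inv_hom: "inv_hom (hatA X) (hat_smult X) (hat_q X) A s q phi"
  unfolding inv_hom_def hatA_inv_carrier
proof (intro conjI ballI allI)
  show "phi \<in> carrier (hatA X) \<rightarrow> IC"
  proof
    fix C :: "('x option list \<Rightarrow> 'k) set" assume "C \<in> carrier (hatA X)"
    then obtain a where a: "a \<in> tens_carrier X" "C = pi X a" using hatA_carrier by blast
    then show "phi C \<in> IC" by (simp add: phi_pi Phi_IC)
  qed
  show "phi \<one>\<^bsub>hatA X\<^esub> = \<one>"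
    by (simp add: pi_one phi_pi bas_closed Phi_bas)
  show "phi (hat_q X) = q"
    by (simp add: hat_q_def phi_pi letter_closed Phi_letter_None)
next
  fix c and x :: "('x option list \<Rightarrow> 'k) set" assume "x \<in> carrier (hatA X)"
  then obtain a where a: "a \<in> tens_carrier X" "x = pi X a" using hatA_carrier by blast
  show "phi (hat_smult X c x) = s c (phi x)"
    using a by (simp add: pi_smult phi_pi t_smult_closed Phi_smult)
next
  fix x y :: "('x option list \<Rightarrow> 'k) set" assume "x \<in> carrier (hatA X)" "y \<in> carrier (hatA X)"
  then obtain a b where a: "a \<in> tens_carrier X" "x = pi X a" and b: "b \<in> tens_carrier X" "y = pi X b"
    using hatA_carrier by metis
  show "phi (x \<oplus>\<^bsub>hatA X\<^esub> y) = phi x \<oplus> phi y"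
    using a b by (simp add: pi_add phi_pi t_add_closed Phi_add)
  show "phi (x \<otimes>\<^bsub>hatA X\<^esub> y) = phi x \<otimes> phi y"
    using a b by (simp add: pi_mult phi_pi t_conv_closed Phi_conv)
qed

lemma phi_hat_i: "x \<in> X \<Longrightarrow> phi (hat_i X x) = \<theta> x"
  by (simp add: hat_i_def phi_pi letter_closed Phi_letter_Some)

lemma unique_aux:
  assumes psi: "inv_hom (hatA X) (hat_smult X) (hat_q X) A s q psi"
    and pt: "\<forall>x\<in>X. psi (hat_i X x) = \<theta> x"
  shows "a \<in> tens_carrier X \<Longrightarrow> psi (pi X a) = Phi a"
proof -
  note ps = psi[unfolded inv_hom_def hatA_inv_carrier]
  have pf: "psi \<in> carrier (hatA X) \<rightarrow> IC"
    and padd0: "\<forall>x\<in>carrier (hatA X). \<forall>y\<in>carrier (hatA X). psi (x \<oplus>\<^bsub>hatA X\<^esub> y) = psi x \<oplus> psi y"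
    and psm0: "\<forall>c. \<forall>x\<in>carrier (hatA X). psi (hat_smult X c x) = s c (psi x)"
    and pmult0: "\<forall>x\<in>carrier (hatA X). \<forall>y\<in>carrier (hatA X). psi (x \<otimes>\<^bsub>hatA X\<^esub> y) = psi x \<otimes> psi y"
    and pone: "psi \<one>\<^bsub>hatA X\<^esub> = \<one>" and pq: "psi (hat_q X) = q"
    using ps by - (elim conjE, assumption)+
  have pc: "psi C \<in> carrier A" if "C \<in> carrier (hatA X)" for C
    using pf that IC_carrier by (simp add: Pi_iff)
  have padd: "psi (C \<oplus>\<^bsub>hatA X\<^esub> D) = psi C \<oplus> psi D" if "C \<in> carrier (hatA X)" "D \<in> carrier (hatA X)" for C D
    using padd0 that by simp
  have pmult: "psi (C \<otimes>\<^bsub>hatA X\<^esub> D) = psi C \<otimes> psi D" if "C \<in> carrier (hatA X)" "D \<in> carrier (hatA X)" for C D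
    using pmult0 that by simp
  have psm: "psi (hat_smult X c C) = s c (psi C)" if "C \<in> carrier (hatA X)" for C c
    using psm0 that by simp
  have pl: "psi (pi X (letter l)) = lv l" if "l \<in> alph X" for l
    using that pq pt by (auto simp: lv_def hat_q_def hat_i_def)
  have pw: "set u \<subseteq> alph X \<Longrightarrow> psi (pi X (bas u)) = wv u" for u
  proof (induction u)
    case Nil
    then show ?case using pone by (simp add: pi_one)
  next
    case (Cons l u)
    then have "psi (pi X (bas (l # u))) = psi (pi X (letter l) \<otimes>\<^bsub>hatA X\<^esub> pi X (bas u))"
      by (simp add: bas_Cons pi_mult letter_closed bas_closed)
    also have "\<dots> = lv l \<otimes> wv u"
      using Cons by (simp add: pmult pi_closed letter_closed bas_closed pl)
    finally show ?case by simp
  qed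
  show "a \<in> tens_carrier X \<Longrightarrow> psi (pi X a) = Phi a"
  proof (induction a rule: tens_induct)
    case zero
    have z: "(\<lambda>w. 0) \<in> (tens_carrier X :: ('x option list \<Rightarrow> 'k) set)" by (rule t_zero_closed)
    have "psi (pi X (\<lambda>w. 0)) = psi (pi X (\<lambda>w. 0)) \<oplus> psi (pi X (\<lambda>w. 0))"
      using padd[OF pi_closed[OF z] pi_closed[OF z]] z by (simp add: pi_add)
    then have "psi (pi X (\<lambda>w. 0)) = \<zero>"
      using add.l_cancel_one[of "psi (pi X (\<lambda>w. 0))" "psi (pi X (\<lambda>w. 0))"] pc[OF pi_closed[OF z]] by simp
    then show ?case by (simp add: Phi_zero)
  next
    case (step g c u)
    have bu: "bas u \<in> tens_carrier X" using step by (simp add: bas_closed)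
    have cb: "(\<lambda>v. c * bas u v) \<in> tens_carrier X" using bu by (rule t_smult_closed)
    have "psi (pi X (\<lambda>v. g v + c * bas u v)) = psi (pi X g \<oplus>\<^bsub>hatA X\<^esub> hat_smult X c (pi X (bas u)))"
    proof -
      have "pi X g \<oplus>\<^bsub>hatA X\<^esub> hat_smult X c (pi X (bas u)) = pi X (\<lambda>v. g v + c * bas u v)"
        using pi_add[OF step(1) cb] pi_smult[OF bu, of c] by simp
      then show ?thesis by simp
    qed
    also have "\<dots> = Phi g \<oplus> s c (wv u)"
    proof -
      have hc: "hat_smult X c (pi X (bas u)) \<in> carrier (hatA X)"
        using pi_smult[OF bu, of c] pi_closed[OF cb] by simp
      have "psi (pi X g \<oplus>\<^bsub>hatA X\<^esub> hat_smult X c (pi X (bas u))) = psi (pi X g) \<oplus> psi (hat_smult X c (pi X (bas u)))"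
        by (rule padd[OF pi_closed[OF step(1)] hc])
      also have "\<dots> = Phi g \<oplus> s c (wv u)"
        using step(3) psm[OF pi_closed[OF bu], of c] pw[OF step(2)] by simp
      finally show ?thesis .
    qed
    also have "\<dots> = Phi (\<lambda>v. g v + c * bas u v)"
      using Phi_add[OF step(1) cb] Phi_smult[OF bu, of c] by (simp add: Phi_bas)
    finally show ?case .
  qed
qed

end


theorem proposition2p1:
  fixes X :: "'x set"
    and A :: "('a, 'm) ring_scheme" and s :: "'k::field \<Rightarrow> 'a \<Rightarrow> 'a" and q :: 'a
    and \<theta> :: "'x \<Rightarrow> 'a"
  assumes "inv_alg A s q"
    and "\<theta> \<in> X \<rightarrow> inv_carrier A q"
  shows "inv_alg (hatA X) (hat_smult X) (hat_q X :: ('x option list \<Rightarrow> 'k) set)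
         \<and> hat_i X \<in> X \<rightarrow> inv_carrier (hatA X) (hat_q X :: ('x option list \<Rightarrow> 'k) set)
         \<and> (\<exists>\<phi>. inv_hom (hatA X) (hat_smult X) (hat_q X) A s q \<phi>
               \<and> (\<forall>x\<in>X. \<phi> (hat_i X x) = \<theta> x)
               \<and> (\<forall>\<psi>. inv_hom (hatA X) (hat_smult X) (hat_q X) A s q \<psi>
                      \<and> (\<forall>x\<in>X. \<psi> (hat_i X x) = \<theta> x)
                      \<longrightarrow> (\<forall>a\<in>inv_carrier (hatA X) (hat_q X). \<psi> a = \<phi> a)))"
proof -
  have ka: "kalg A s" and qc: "q \<in> carrier A" and qq: "q \<otimes>\<^bsub>A\<^esub> q = q"
    using assms(1) by (simp_all add: inv_alg_def)
  have rA: "ring A" using ka by (simp add: kalg_def)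
  interpret C: ctx A X s q \<theta>
    by (rule ctx.intro[OF rA]) (rule ctx_axioms.intro[OF ka qc qq assms(2)])
  have uniq: "\<forall>\<psi>. inv_hom (hatA X) (hat_smult X) (hat_q X) A s q \<psi>
                      \<and> (\<forall>x\<in>X. \<psi> (hat_i X x) = \<theta> x)
                      \<longrightarrow> (\<forall>a\<in>inv_carrier (hatA X) (hat_q X). \<psi> a = C.phi a)"
  proof (intro allI impI ballI)
    fix \<psi> and C :: "('x option list \<Rightarrow> 'k) set"
    assume h: "inv_hom (hatA X) (hat_smult X) (hat_q X) A s q \<psi> \<and> (\<forall>x\<in>X. \<psi> (hat_i X x) = \<theta> x)"
      and c: "C \<in> inv_carrier (hatA X) (hat_q X)"
    have "C \<in> carrier (hatA X)" using c by (simp add: hatA_inv_carrier)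
    then obtain a where a: "a \<in> tens_carrier X" "C = pi X a"
      using hatA_carrier by blast
    have "\<psi> (pi X a) = C.Phi a" by (rule C.unique_aux[OF conjunct1[OF h] conjunct2[OF h] a(1)])
    then show "\<psi> C = C.phi C" using a by (simp add: C.phi_pi)
  qed
  show ?thesis
  proof (intro conjI exI[of _ C.phi])
    show "inv_alg (hatA X) (hat_smult X) (hat_q X :: ('x option list \<Rightarrow> 'k) set)" by (rule hatA_inv_alg)
    show "hat_i X \<in> X \<rightarrow> inv_carrier (hatA X) (hat_q X :: ('x option list \<Rightarrow> 'k) set)" by (rule hat_i_in)
    show "inv_hom (hatA X) (hat_smult X) (hat_q X) A s q C.phi" by (rule C.phi_inv_hom)
    show "\<forall>x\<in>X. C.phi (hat_i X x) = \<theta> x" using C.phi_hat_i by simp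
  qed (rule uniq)
qed


end
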